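(* Let $T$, $\mathcal{S}=\mathcal{S}_+\cup\mathcal{S}_-$, $\Psi$, $U$, $\lambda,\mu$, $P_\lambda,P_\mu$ and $W$ be as in the context. Consider the discrete-time QBD with phase space $\mathcal{S}$ and transition blocks $$C_{-1}=\begin{bmatrix}0&(I-\mu^{-1}T_{++})^{-1}P_{\mu+-}\\0&W\end{bmatrix},\quad C_0=\begin{bmatrix}0&(I-\mu^{-1}T_{++})^{-1}P_{\lambda+-}\\0&0\end{bmatrix},\quad C_1=\begin{bmatrix}(I-\mu^{-1}T_{++})^{-1}P_{\lambda++}&0\\0&0\end{bmatrix}.$$ Then its $\mathcal{G}$-matrix is $$\mathcal{G}_C=\begin{bmatrix}0&\Psi\\0&W\end{bmatrix}.$$
   Context: $T$ is the generator of a continuous-time Markov chain on a finite set $\mathcal{S}=\mathcal{S}_+\cup\mathcal{S}_-$ (disjoint, both nonempty), partitioned into blocks $T_{++},T_{+-},T_{-+},T_{--}$ according to $\mathcal{S}_\pm$. $\Psi$ is the minimal nonnegative solution of $T_{+-}+\Psi T_{--}+T_{++}\Psi+\Psi T_{-+}\Psi=0$ (the first-return probability matrix of the unit-rate fluid queue with phase generator $T$, rates $+1$ on $\mathcal{S}_+$ and $-1$ on $\mathcal{S}_-$), and $U:=T_{--}+T_{-+}\Psi$. $\lambda,\mu>0$ satisfy $\lambda,\mu\ge\max_i|T_{ii}|$; $P_\lambda:=I+\lambda^{-1}T$, $P_\mu:=I+\mu^{-1}T$ with blocks $P_{\lambda++}$ etc.; $W:=(I+\mu^{-1}U)(I-\lambda^{-1}U)^{-1}$.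 A discrete-time quasi-birth-death process (QBD) with transition blocks $L_{-1},L_0,L_1$ is a Markov chain $\{(Y_n,\kappa_n)\}$ on $\mathbb{Z}\times\mathcal{S}$ with $\mathbb{P}[Y_n=k+d,\kappa_n=j\mid Y_{n-1}=k,\kappa_{n-1}=i]=(L_d)_{ij}$ for $d\in\{-1,0,1\}$. Its $\mathcal{G}$-matrix has entries $\mathcal{G}_{ij}=\mathbb{P}[\theta<\infty,\kappa_\theta=j\mid Y_0=k,\kappa_0=i]$ with $\theta=\inf\{n>0:Y_n=k-1\}$. Matrices are partitioned into blocks according to $\mathcal{S}_+,\mathcal{S}_-$. *)

theory Defs
  imports "HOL-Analysis.Analysis"
begin

text \<open>Phase space S = S+ \<union> S-, realised as the sum type 'p + 'm
  (Inl = S+, Inr = S-). Matrices are HOL-Analysis matrices real^cols^rows.\<close>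

definition blk_pp :: "real^('p::finite+'m::finite)^('p+'m) \<Rightarrow> real^'p^'p" where
  "blk_pp A = (\<chi> a b. A $ Inl a $ Inl b)"
definition blk_pm :: "real^('p::finite+'m::finite)^('p+'m) \<Rightarrow> real^'m^'p" where
  "blk_pm A = (\<chi> a b. A $ Inl a $ Inr b)"
definition blk_mp :: "real^('p::finite+'m::finite)^('p+'m) \<Rightarrow> real^'p^'m" where
  "blk_mp A = (\<chi> a b. A $ Inr a $ Inl b)"
definition blk_mm :: "real^('p::finite+'m::finite)^('p+'m) \<Rightarrow> real^'m^'m" where
  "blk_mm A = (\<chi> a b. A $ Inr a $ Inr b)"

definition block_mat :: "real^'p^'p \<Rightarrow> real^'m^'p \<Rightarrow> real^'p^'m \<Rightarrow> real^'m^'m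
    \<Rightarrow> real^('p::finite+'m::finite)^('p+'m)" where
  "block_mat A B C D = (\<chi> i j. (case i of
       Inl a \<Rightarrow> (case j of Inl b \<Rightarrow> A $ a $ b | Inr b \<Rightarrow> B $ a $ b)
     | Inr a \<Rightarrow> (case j of Inl b \<Rightarrow> C $ a $ b | Inr b \<Rightarrow> D $ a $ b)))"

definition is_generator :: "real^'s^'s \<Rightarrow> bool" where
  "is_generator T \<longleftrightarrow> (\<forall>i j. i \<noteq> j \<longrightarrow> T $ i $ j \<ge> 0) \<and> (\<forall>i. (\<Sum>j\<in>UNIV. T $ i $ j) = 0)"

definition nonneg_mat :: "real^'c^'r \<Rightarrow> bool" where
  "nonneg_mat X \<longleftrightarrow> (\<forall>i j. X $ i $ j \<ge> 0)"

definition riccati :: "real^('p::finite+'m::finite)^('p+'m) \<Rightarrow> real^'m^'p \<Rightarrow> bool" where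
  "riccati T X \<longleftrightarrow>
     blk_pm T + X ** blk_mm T + blk_pp T ** X + X ** blk_mp T ** X = 0"

definition is_min_nonneg_sol :: "real^('p::finite+'m::finite)^('p+'m) \<Rightarrow> real^'m^'p \<Rightarrow> bool" where
  "is_min_nonneg_sol T Psi \<longleftrightarrow> nonneg_mat Psi \<and> riccati T Psi \<and>
     (\<forall>X. nonneg_mat X \<and> riccati T X \<longrightarrow> (\<forall>i j. Psi $ i $ j \<le> X $ i $ j))"

definition qbd_step :: "real^'s^'s \<Rightarrow> real^'s^'s \<Rightarrow> real^'s^'s \<Rightarrow> int \<Rightarrow> real^'s^'s" where
  "qbd_step Lm L0 L1 d = (if d = -1 then Lm else if d = 0 then L0 else if d = 1 then L1 else 0)"

text \<open>taboo L n i k j: probability that, starting in (level 0, phase i), the QBD is in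
  (level k, phase j) at time n, with levels \<ge> 0 at all times 0..n (k is the level offset).\<close>
fun qbd_taboo :: "(int \<Rightarrow> real^'s^'s) \<Rightarrow> nat \<Rightarrow> 's::finite \<Rightarrow> nat \<Rightarrow> 's \<Rightarrow> real" where
  "qbd_taboo L 0 i k j = (if k = 0 \<and> j = i then 1 else 0)"
| "qbd_taboo L (Suc n) i k j =
     (\<Sum>k'\<le>n. \<Sum>j'\<in>UNIV. qbd_taboo L n i k' j' * (L (int k - int k')) $ j' $ j)"

text \<open>P[theta = n+1, kappa_theta = j | Y_0 = level, kappa_0 = i].\<close>
definition qbd_first_passage :: "(int \<Rightarrow> real^'s^'s) \<Rightarrow> nat \<Rightarrow> 's::finite \<Rightarrow> 's \<Rightarrow> real" where
  "qbd_first_passage L n i j = (\<Sum>j'\<in>UNIV. qbd_taboo L n i 0 j' * (L (-1)) $ j' $ j)"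

definition qbd_G :: "real^'s^'s \<Rightarrow> real^'s^'s \<Rightarrow> real^'s^'s \<Rightarrow> real^'s^'s::finite" where
  "qbd_G Lm L0 L1 = (\<chi> i j. \<Sum>n. qbd_first_passage (qbd_step Lm L0 L1) n i j)"

end

theory Submission
  imports Defs
begin


lemma matrix_inv_eq:
  fixes A B :: "real^'n::finite^'n"
  assumes "B ** A = mat 1" "A ** B = mat 1"
  shows "matrix_inv A ** A = mat 1 \<and> A ** matrix_inv A = mat 1"
  unfolding matrix_inv_def by (rule someI2[of _ B]) (use assms in auto)

lemma zmat_monotone:
  fixes N :: "real^'n::finite^'n"
  assumes off: "\<And>i j. i \<noteq> j \<Longrightarrow> N$i$j \<le> 0" and rs: "\<And>i. (\<Sum>j\<in>UNIV. N$i$j) > 0"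
    and nx: "\<And>i. (N *v x)$i \<ge> 0"
  shows "x$i \<ge> 0"
proof -
  let ?m = "Min (range (\<lambda>j. x$j))"
  have "?m \<in> range (\<lambda>j. x$j)" by (rule Min_in) simp_all
  then obtain i0 where i0: "x$i0 = ?m" by (metis rangeE)
  have le: "\<And>j. x$i0 \<le> x$j" unfolding i0 by (rule Min_le) simp_all
  have "x$i0 \<ge> 0"
  proof (rule ccontr)
    assume neg: "\<not> x$i0 \<ge> 0"
    have "(N *v x)$i0 = (\<Sum>j\<in>UNIV. N$i0$j * x$j)" by (simp add: matrix_vector_mult_def)
    also have "\<dots> \<le> (\<Sum>j\<in>UNIV. N$i0$j * x$i0)"
    proof (rule sum_mono)
      fix j show "N$i0$j * x$j \<le> N$i0$j * x$i0"
        by (cases "j = i0") (auto intro: mult_left_mono_neg off le)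
    qed
    also have "\<dots> = x$i0 * (\<Sum>j\<in>UNIV. N$i0$j)" by (simp add: sum_distrib_left mult.commute)
    also have "\<dots> < 0" using neg rs[of i0] by (simp add: mult_neg_pos)
    finally show False using nx[of i0] by simp
  qed
  then show ?thesis using le[of i] by simp
qed

lemma zmat_inv:
  fixes N :: "real^'n::finite^'n"
  assumes off: "\<And>i j. i \<noteq> j \<Longrightarrow> N$i$j \<le> 0" and rs: "\<And>i. (\<Sum>j\<in>UNIV. N$i$j) > 0"
  shows "matrix_inv N ** N = mat 1" "N ** matrix_inv N = mat 1" "\<And>i j. matrix_inv N $ i $ j \<ge> 0"
proof -
  have ker: "\<forall>x. N *v x = 0 \<longrightarrow> x = 0"
  proof (intro allI impI)
    fix x :: "real^'n" assume x0: "N *v x = 0"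
    have nn: "\<And>i. 0 \<le> (N *v x)$i" by (simp add: x0)
    have a: "x$i \<ge> 0" for i using zmat_monotone[OF off rs nn] .
    have neg: "(N *v (-x))$i = - ((N *v x)$i)" for i
      by (simp add: matrix_vector_mult_def sum_negf)
    have nn2: "\<And>i. 0 \<le> (N *v (-x))$i" by (simp add: neg x0)
    have b: "(-x)$i \<ge> 0" for i using zmat_monotone[OF off rs nn2] .
    have "x$i = 0" for i using a[of i] b[of i] by simp
    then show "x = 0" by (simp add: vec_eq_iff)
  qed
  then obtain B where B: "B ** N = mat 1" using matrix_left_invertible_ker by blast
  then have B2: "N ** B = mat 1" using matrix_left_right_inverse by blast
  from matrix_inv_eq[OF B B2] show i1: "matrix_inv N ** N = mat 1" and i2: "N ** matrix_inv N = mat 1" by auto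
  fix i j
  let ?x = "matrix_inv N *v axis j 1"
  have ax: "N *v ?x = axis j 1" by (simp add: matrix_vector_mul_assoc i2)
  have nn3: "\<And>i. 0 \<le> (N *v ?x)$i" unfolding ax by (simp add: axis_def)
  have "?x $ i \<ge> 0" using zmat_monotone[OF off rs nn3] .
  then show "matrix_inv N $ i $ j \<ge> 0"
    by (simp add: matrix_vector_mult_def axis_def if_distrib cong: if_cong)
qed



lemma mm_entry: "(X ** Y) $ i $ j = (\<Sum>k\<in>UNIV. X$i$k * Y$k$j)"
  by (simp add: matrix_matrix_mult_def)

lemma mv_entry: "(X *v v) $ i = (\<Sum>k\<in>UNIV. X$i$k * v$k)"
  by (simp add: matrix_vector_mult_def)

lemma nonneg_iff: "nonneg_mat X \<longleftrightarrow> 0 \<le> X"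
  by (simp add: nonneg_mat_def less_eq_vec_def)

lemma mle_iff: "(X::real^'n^'m) \<le> Y \<longleftrightarrow> (\<forall>i j. X$i$j \<le> Y$i$j)"
  by (simp add: less_eq_vec_def)

lemma mm_nonneg: fixes X :: "real^'n::finite^'m::finite" and Y :: "real^'k::finite^'n"
  shows "0 \<le> X \<Longrightarrow> 0 \<le> Y \<Longrightarrow> 0 \<le> X ** Y"
  by (auto simp: mle_iff mm_entry intro!: sum_nonneg)

lemma mm_mono_l: fixes A :: "real^'n::finite^'m::finite" and X :: "real^'k::finite^'n"
  shows "0 \<le> A \<Longrightarrow> X \<le> Y \<Longrightarrow> A ** X \<le> A ** Y"
  by (auto simp: mle_iff mm_entry intro!: sum_mono mult_left_mono)

lemma mm_mono_r: fixes B :: "real^'n::finite^'m::finite" and X :: "real^'m^'k::finite"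
  shows "X \<le> Y \<Longrightarrow> 0 \<le> B \<Longrightarrow> X ** B \<le> Y ** B"
  by (auto simp: mle_iff mm_entry intro!: sum_mono mult_right_mono)

lemma mv_mono: fixes A :: "real^'n::finite^'m::finite"
  shows "0 \<le> A \<Longrightarrow> v \<le> w \<Longrightarrow> A *v v \<le> A *v w"
  by (auto simp: mle_iff less_eq_vec_def mv_entry intro!: sum_mono mult_left_mono)

lemma mv_nonneg: fixes A :: "real^'n::finite^'m::finite"
  shows "0 \<le> A \<Longrightarrow> 0 \<le> v \<Longrightarrow> 0 \<le> A *v v"
  by (auto simp: mle_iff less_eq_vec_def mv_entry intro!: sum_nonneg)

lemma mm_add_r: fixes A B :: "real^'n::finite^'m::finite" shows "(A + B) ** C = A ** C + B ** C"
  by (simp add: vec_eq_iff mm_entry distrib_right sum.distrib)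
lemma mm_add_l: fixes A :: "real^'n::finite^'m::finite" shows "A ** (B + C) = A ** B + A ** C"
  by (rule matrix_add_ldistrib)
lemma mm_sub_r: fixes A B :: "real^'n::finite^'m::finite" shows "(A - B) ** C = A ** C - B ** C"
  by (simp add: vec_eq_iff mm_entry left_diff_distrib sum_subtractf)
lemma mm_sub_l: fixes A :: "real^'n::finite^'m::finite" shows "A ** (B - C) = A ** B - A ** C"
  by (simp add: vec_eq_iff mm_entry right_diff_distrib sum_subtractf)
lemma mm_scale_l: fixes A :: "real^'n::finite^'m::finite" shows "(c *\<^sub>R A) ** B = c *\<^sub>R (A ** B)"
  by (simp add: scalar_matrix_assoc)
lemma mm_scale_r: fixes A :: "real^'n::finite^'m::finite" shows "A ** (c *\<^sub>R B) = c *\<^sub>R (A ** B)"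
  by (simp add: matrix_scalar_ac scalar_matrix_assoc)
lemma mm_neg_l: fixes A :: "real^'n::finite^'m::finite" shows "(- A) ** B = - (A ** B)"
  by (simp add: vec_eq_iff mm_entry sum_negf)
lemma mm_neg_r: fixes A :: "real^'n::finite^'m::finite" shows "A ** (- B) = - (A ** B)"
  by (simp add: vec_eq_iff mm_entry sum_negf)

lemmas mm_simps = mm_add_r mm_add_l mm_sub_r mm_sub_l mm_scale_l mm_scale_r mm_neg_l mm_neg_r
  matrix_mul_assoc matrix_mul_lid matrix_mul_rid

lemma mv_add: fixes A B :: "real^'n::finite^'m::finite" shows "(A + B) *v v = A *v v + B *v v"
  by (simp add: vec_eq_iff mv_entry distrib_right sum.distrib)
lemma mv_scale: fixes A :: "real^'n::finite^'m::finite" shows "(c *\<^sub>R A) *v v = c *\<^sub>R (A *v v)"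
  by (simp add: vec_eq_iff mv_entry sum_distrib_left mult.assoc)
lemma mv_mm: "(A ** B) *v v = A *v (B *v v)"
  by (simp add: matrix_vector_mul_assoc)

lemma sum_UNIV_sum: "(\<Sum>j\<in>(UNIV::('a::finite + 'b::finite) set). f j) = (\<Sum>a\<in>UNIV. f (Inl a)) + (\<Sum>b\<in>UNIV. f (Inr b))"
proof -
  have "(\<Sum>j\<in>(UNIV::('a + 'b) set). f j) = (\<Sum>j\<in>(UNIV <+> UNIV). f j)" by simp
  also have "\<dots> = (\<Sum>a\<in>UNIV. f (Inl a)) + (\<Sum>b\<in>UNIV. f (Inr b))"
    by (subst sum.Plus) (simp_all add: comp_def)
  finally show ?thesis .
qed

definition mlim :: "(nat \<Rightarrow> real^'n^'m) \<Rightarrow> real^'n^'m \<Rightarrow> bool" where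
  "mlim X L \<longleftrightarrow> (\<forall>i j. (\<lambda>n. X n $ i $ j) \<longlonglongrightarrow> L $ i $ j)"

lemma mlim_const: "mlim (\<lambda>n. C) C" by (simp add: mlim_def)
lemma mlim_add: "mlim X L \<Longrightarrow> mlim Y M \<Longrightarrow> mlim (\<lambda>n. X n + Y n) (L + M)"
  by (simp add: mlim_def tendsto_add)
lemma mlim_diff: "mlim X L \<Longrightarrow> mlim Y M \<Longrightarrow> mlim (\<lambda>n. X n - Y n) (L - M)"
  by (simp add: mlim_def tendsto_diff)
lemma mlim_scale: "mlim X L \<Longrightarrow> mlim (\<lambda>n. c *\<^sub>R X n) (c *\<^sub>R L)"
  by (simp add: mlim_def tendsto_mult_left)
lemma mlim_mm: fixes X :: "nat \<Rightarrow> real^'k::finite^'m::finite" and Y :: "nat \<Rightarrow> real^'n::finite^'k"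
  shows "mlim X L \<Longrightarrow> mlim Y M \<Longrightarrow> mlim (\<lambda>n. X n ** Y n) (L ** M)"
  unfolding mlim_def mm_entry by (auto intro!: tendsto_sum tendsto_mult)
lemma mlim_unique: "mlim X L \<Longrightarrow> mlim X M \<Longrightarrow> L = M"
  unfolding mlim_def vec_eq_iff using LIMSEQ_unique by blast
lemma mlim_Suc: "mlim X L \<Longrightarrow> mlim (\<lambda>n. X (Suc n)) L"
  unfolding mlim_def by (auto intro: LIMSEQ_Suc)
lemma mlim_le: "mlim X L \<Longrightarrow> (\<And>n. X n \<le> C) \<Longrightarrow> L \<le> C"
  unfolding mlim_def mle_iff by (meson LIMSEQ_le_const2)
lemma mlim_ge: "mlim X L \<Longrightarrow> (\<And>n. C \<le> X n) \<Longrightarrow> C \<le> L"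
  unfolding mlim_def mle_iff by (meson LIMSEQ_le_const)

fun mpow :: "real^'n^'n \<Rightarrow> nat \<Rightarrow> real^'n^'n" where
  "mpow X 0 = mat 1"
| "mpow X (Suc n) = X ** mpow X n"

lemma mpow_Suc_right: fixes X :: "real^'n::finite^'n" shows "mpow X (Suc n) = mpow X n ** X"
  by (induction n) (simp_all add: matrix_mul_assoc)

lemma mpow_nonneg: fixes X :: "real^'n::finite^'n" shows "0 \<le> X \<Longrightarrow> 0 \<le> mpow X n"
proof (induction n)
  case 0 show ?case by (simp add: mle_iff mat_def)
next
  case (Suc n) then show ?case by (simp add: mm_nonneg)
qed



lemma ite01_mult: "(if c then 1 else 0) * (x::real) = (if c then x else 0)" by simp

lemma block_mat_entries:
  "block_mat A B C D $ Inl a $ Inl b = A$a$b"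
  "block_mat A B C D $ Inl a $ Inr c = B$a$c"
  "block_mat A B C D $ Inr e $ Inl b = C$e$b"
  "block_mat A B C D $ Inr e $ Inr c = D$e$c"
  by (simp_all add: block_mat_def)

context
  fixes A :: "real^'p::finite^'p" and B0 Bd :: "real^'m::finite^'p" and W :: "real^'m^'m"
begin

abbreviation "LL \<equiv> qbd_step (block_mat 0 Bd 0 W) (block_mat 0 B0 0 0) (block_mat A 0 0 0)"

lemma LL_entries:
  "LL d $ Inl a $ Inl b = (if d = 1 then A$a$b else 0)"
  "LL d $ Inl a $ Inr c = (if d = -1 then Bd$a$c else if d = 0 then B0$a$c else 0)"
  "LL d $ Inr e $ Inl b = 0"
  "LL d $ Inr e $ Inr c = (if d = -1 then W$e$c else 0)"
  by (simp_all add: qbd_step_def block_mat_def)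

definition tabP :: "nat \<Rightarrow> nat \<Rightarrow> 'p \<Rightarrow> 'p \<Rightarrow> real" where
  "tabP n k p0 p = (if k = n then mpow A n $ p0 $ p else 0)"

definition tabM :: "nat \<Rightarrow> nat \<Rightarrow> 'p \<Rightarrow> 'm \<Rightarrow> real" where
  "tabM n k p0 q = (\<Sum>m<n. (if 2*m+1 = n+k then (mpow A m ** B0 ** mpow W (n-m-1))$p0$q else 0)
                         + (if 2*m = n+k then (mpow A m ** Bd ** mpow W (n-m-1))$p0$q else 0))"

lemma tabM_big: "n \<le> k \<Longrightarrow> tabM n k p0 q = 0"
  unfolding tabM_def by (intro sum.neutral) auto

lemma tabM_W: "(\<Sum>b\<in>UNIV. tabM n k p0 b * W$b$q) =
   (\<Sum>m<n. (if 2*m+1 = n+k then (mpow A m ** B0 ** mpow W (n-m))$p0$q else 0)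
         + (if 2*m = n+k then (mpow A m ** Bd ** mpow W (n-m))$p0$q else 0))"
proof -
  have "(\<Sum>b\<in>UNIV. tabM n k p0 b * W$b$q) =
     (\<Sum>m<n. (if 2*m+1 = n+k then (mpow A m ** B0 ** mpow W (n-m-1) ** W)$p0$q else 0)
         + (if 2*m = n+k then (mpow A m ** Bd ** mpow W (n-m-1) ** W)$p0$q else 0))"
    unfolding tabM_def sum_distrib_right
    apply (subst sum.swap)
    apply (rule sum.cong[OF refl])
    subgoal for m
      by (cases "2*m+1 = n+k"; cases "2*m = n+k") (simp_all add: mm_entry[of _ W])
    done
  also have "\<dots> = (\<Sum>m<n. (if 2*m+1 = n+k then (mpow A m ** B0 ** mpow W (n-m))$p0$q else 0)
         + (if 2*m = n+k then (mpow A m ** Bd ** mpow W (n-m))$p0$q else 0))"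
  proof (rule sum.cong[OF refl])
    fix m assume "m \<in> {..<n}"
    then have "mpow W (n-m-1) ** W = mpow W (n-m)"
      using mpow_Suc_right[of W "n-m-1"] by (simp add: Suc_diff_Suc)
    then show "(if 2*m+1 = n+k then (mpow A m ** B0 ** mpow W (n-m-1) ** W)$p0$q else 0)
         + (if 2*m = n+k then (mpow A m ** Bd ** mpow W (n-m-1) ** W)$p0$q else 0) =
         (if 2*m+1 = n+k then (mpow A m ** B0 ** mpow W (n-m))$p0$q else 0)
         + (if 2*m = n+k then (mpow A m ** Bd ** mpow W (n-m))$p0$q else 0)"
      by (simp add: matrix_mul_assoc[symmetric])
  qed
  finally show ?thesis .
qed

lemma taboo_Inl:
  "qbd_taboo LL n (Inl p0) k (Inl p) = tabP n k p0 p \<and> qbd_taboo LL n (Inl p0) k (Inr q) = tabM n k p0 q"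
proof (induction n arbitrary: k p q)
  case 0 show ?case by (simp add: tabP_def tabM_def mat_def)
next
  case (Suc n)
  have IHp: "\<And>k a. qbd_taboo LL n (Inl p0) k (Inl a) = tabP n k p0 a" using Suc.IH by blast
  have IHm: "\<And>k b. qbd_taboo LL n (Inl p0) k (Inr b) = tabM n k p0 b" using Suc.IH by blast
  have step: "qbd_taboo LL (Suc n) (Inl p0) k j = (\<Sum>k'\<le>n. (\<Sum>a\<in>UNIV. tabP n k' p0 a * LL (int k - int k') $ Inl a $ j)
      + (\<Sum>b\<in>UNIV. tabM n k' p0 b * LL (int k - int k') $ Inr b $ j))" for j
    by (simp add: sum_UNIV_sum IHp IHm)
  have "qbd_taboo LL (Suc n) (Inl p0) k (Inl p) =
      (\<Sum>k'\<le>n. if k' = n then (if k = Suc n then (mpow A n ** A)$p0$p else 0) else 0)"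
    unfolding step LL_entries
    apply (rule sum.cong[OF refl])
    subgoal for k' by (cases "k' = n"; cases "k = Suc n") (auto simp: tabP_def mm_entry)
    done
  also have "\<dots> = tabP (Suc n) k p0 p" by (simp add: tabP_def mpow_Suc_right[symmetric])
  finally have P: "qbd_taboo LL (Suc n) (Inl p0) k (Inl p) = tabP (Suc n) k p0 p" .
  have "qbd_taboo LL (Suc n) (Inl p0) k (Inr q) =
      (\<Sum>k'\<le>n. (if k' = n then (if Suc k = n then (mpow A n ** Bd)$p0$q else if k = n then (mpow A n ** B0)$p0$q else 0) else 0)
         + (if k' = Suc k then (\<Sum>b\<in>UNIV. tabM n k' p0 b * W$b$q) else 0))"
    unfolding step LL_entries
    apply (rule sum.cong[OF refl])
    subgoal for k' by (cases "k' = n"; cases "k' = Suc k"; cases "k = n") (auto simp: tabP_def mm_entry)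
    done
  also have "\<dots> = (if Suc k = n then (mpow A n ** Bd)$p0$q else if k = n then (mpow A n ** B0)$p0$q else 0)
      + (if Suc k \<le> n then (\<Sum>b\<in>UNIV. tabM n (Suc k) p0 b * W$b$q) else 0)"
    by (simp add: sum.distrib)
  also have "\<dots> = tabM (Suc n) k p0 q"
  proof (cases "Suc k \<le> n")
    case True
    have e: "\<And>m. mpow W (Suc n - m - 1) = mpow W (n - m)" by (metis diff_Suc_1 diff_commute)
    show ?thesis using True unfolding tabM_W tabM_def[of "Suc n"] sum.lessThan_Suc e by auto
  next
    case False
    have z: "(\<Sum>m<n. (if 2*m+1 = Suc n+k then (mpow A m ** B0 ** mpow W (Suc n-m-1))$p0$q else 0)
         + (if 2*m = Suc n+k then (mpow A m ** Bd ** mpow W (Suc n-m-1))$p0$q else 0)) = 0"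
      using False by (intro sum.neutral) auto
    show ?thesis using False unfolding tabM_def[of "Suc n"] sum.lessThan_Suc z by auto
  qed
  finally show ?case using P by simp
qed

lemma taboo_Inr: "qbd_taboo LL (Suc n) (Inr e) k j = 0"
proof (induction n arbitrary: k j)
  case 0
  show ?case by (cases j) (simp_all add: sum_UNIV_sum LL_entries)
next
  case (Suc n)
  then show ?case by (simp del: qbd_taboo.simps(2) add: qbd_taboo.simps(2)[of _ "Suc n"])
qed

definition hh :: "nat \<Rightarrow> real^'m^'p" where
  "hh n = (if even n then mpow A (n div 2) ** Bd ** mpow W (n div 2)
           else mpow A (n div 2) ** B0 ** mpow W (Suc (n div 2)))"

lemma fp_Inl_Inr: "qbd_first_passage LL n (Inl p0) (Inr q) = hh n $ p0 $ q"
proof -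
  have "qbd_first_passage LL n (Inl p0) (Inr q) =
      (\<Sum>a\<in>UNIV. tabP n 0 p0 a * Bd$a$q) + (\<Sum>b\<in>UNIV. tabM n 0 p0 b * W$b$q)"
    unfolding qbd_first_passage_def by (simp add: sum_UNIV_sum taboo_Inl LL_entries)
  also have "\<dots> = (if n = 0 then Bd$p0$q else 0) +
      (\<Sum>m<n. (if 2*m+1 = n then (mpow A m ** B0 ** mpow W (n-m))$p0$q else 0)
         + (if 2*m = n then (mpow A m ** Bd ** mpow W (n-m))$p0$q else 0))"
    unfolding tabM_W by (cases "n = 0") (simp_all add: tabP_def mat_def ite01_mult)
  also have "\<dots> = hh n $ p0 $ q"
  proof (cases "even n")
    case True
    then obtain c where c: "n = 2*c" by blast
    show ?thesis
    proof (cases "n = 0")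
      case True then show ?thesis by (simp add: hh_def)
    next
      case False
      then have cn: "c < n" using c by simp
      have "(\<Sum>m<n. (if 2*m+1 = n then (mpow A m ** B0 ** mpow W (n-m))$p0$q else 0)
         + (if 2*m = n then (mpow A m ** Bd ** mpow W (n-m))$p0$q else 0)) =
         (\<Sum>m<n. if m = c then (mpow A c ** Bd ** mpow W c)$p0$q else 0)"
        by (rule sum.cong[OF refl]) (auto simp: c)
      also have "\<dots> = (mpow A c ** Bd ** mpow W c)$p0$q" using cn by simp
      finally show ?thesis using False c by (simp add: hh_def)
    qed
  next
    case False
    then obtain c where c: "n = 2*c+1" using oddE by blast
    have cn: "c < n" using c by simp
    have "(\<Sum>m<n. (if 2*m+1 = n then (mpow A m ** B0 ** mpow W (n-m))$p0$q else 0)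
       + (if 2*m = n then (mpow A m ** Bd ** mpow W (n-m))$p0$q else 0)) =
       (\<Sum>m<n. if m = c then (mpow A c ** B0 ** mpow W (Suc c))$p0$q else 0)"
      by (rule sum.cong[OF refl]) (auto simp: c)
    also have "\<dots> = (mpow A c ** B0 ** mpow W (Suc c))$p0$q" using cn by simp
    finally show ?thesis using False c by (simp add: hh_def)
  qed
  finally show ?thesis .
qed

lemma fp_Inl_Inl: "qbd_first_passage LL n (Inl p0) (Inl p) = 0"
  unfolding qbd_first_passage_def by (simp add: LL_entries sum_UNIV_sum)

lemma fp_Inr: "qbd_first_passage LL n (Inr e) j = (if n = 0 then LL (-1) $ Inr e $ j else 0)"
proof (cases n)
  case 0 then show ?thesis
    unfolding qbd_first_passage_def by (simp add: sum_UNIV_sum ite01_mult)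
next
  case (Suc n') then show ?thesis
    unfolding qbd_first_passage_def by (simp only: taboo_Inr) simp
qed

lemma G_closed:
  "qbd_G (block_mat 0 Bd 0 W) (block_mat 0 B0 0 0) (block_mat A 0 0 0) =
     block_mat 0 (\<chi> i j. \<Sum>n. hh n $ i $ j) 0 W"
proof -
  have "qbd_G (block_mat 0 Bd 0 W) (block_mat 0 B0 0 0) (block_mat A 0 0 0) $ i $ j =
        block_mat 0 (\<chi> i j. \<Sum>n. hh n $ i $ j) 0 W $ i $ j" for i j
  proof (cases i)
    case (Inl p0)
    then show ?thesis
      by (cases j) (simp_all add: qbd_G_def block_mat_entries fp_Inl_Inl fp_Inl_Inr)
  next
    case (Inr e)
    have "(\<lambda>n. qbd_first_passage LL n (Inr e) j) sums (LL (-1) $ Inr e $ j)"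
      unfolding fp_Inr using sums_single[of 0 "\<lambda>_. LL (-1) $ Inr e $ j"] by simp
    then have "(\<Sum>n. qbd_first_passage LL n (Inr e) j) = LL (-1) $ Inr e $ j" by (rule sums_unique[symmetric])
    then show ?thesis using Inr
      by (cases j) (simp_all add: qbd_G_def block_mat_entries qbd_step_def)
  qed
  then show ?thesis by (simp add: vec_eq_iff)
qed

end


lemma blk_entries:
  "blk_pp X $ a $ b = X $ Inl a $ Inl b" "blk_pm X $ a $ c = X $ Inl a $ Inr c"
  "blk_mp X $ e $ b = X $ Inr e $ Inl b" "blk_mm X $ e $ c = X $ Inr e $ Inr c"
  by (simp_all add: blk_pp_def blk_pm_def blk_mp_def blk_mm_def)

lemma mat1_entry: "(mat 1 :: real^'n^'n) $ i $ j = (if i = j then 1 else 0)"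
  by (simp add: mat_def)

lemma mm_nonpos: fixes X :: "real^'n::finite^'m::finite" and Y :: "real^'k::finite^'n"
  shows "0 \<le> X \<Longrightarrow> Y \<le> 0 \<Longrightarrow> X ** Y \<le> 0"
  using mm_mono_l[of X Y 0] by simp

lemma mv_mono_mat: fixes A B :: "real^'n::finite^'m::finite"
  shows "A \<le> B \<Longrightarrow> 0 \<le> v \<Longrightarrow> A *v v \<le> B *v v"
  by (auto simp: mle_iff less_eq_vec_def mv_entry intro!: sum_mono mult_right_mono)

locale qctx =
  fixes T :: "real^('p::finite + 'm::finite)^('p + 'm)" and Psi :: "real^'m^'p" and lam mu :: real
  assumes gen: "is_generator T" and PsiA: "is_min_nonneg_sol T Psi"
    and lam_pos: "lam > 0" and mu_pos: "mu > 0"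
    and lam_ge: "\<forall>i. \<bar>T $ i $ i\<bar> \<le> lam" and mu_ge: "\<forall>i. \<bar>T $ i $ i\<bar> \<le> mu"
begin

abbreviation "Tpp \<equiv> blk_pp T"
abbreviation "Tpm \<equiv> blk_pm T"
abbreviation "Tmp \<equiv> blk_mp T"
abbreviation "Tmm \<equiv> blk_mm T"

lemma T_off: "i \<noteq> j \<Longrightarrow> 0 \<le> T$i$j" using gen by (simp add: is_generator_def)
lemma T_row: "(\<Sum>j\<in>UNIV. T$i$j) = 0" using gen by (simp add: is_generator_def)
lemma T_diag_lam: "- lam \<le> T$i$i" using lam_ge by (metis abs_le_iff minus_le_iff)
lemma T_diag_mu: "- mu \<le> T$i$i" using mu_ge by (metis abs_le_iff minus_le_iff)

lemma Psi0: "0 \<le> Psi" using PsiA by (simp add: is_min_nonneg_sol_def nonneg_iff)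
lemma Psi_ric: "riccati T Psi" using PsiA by (simp add: is_min_nonneg_sol_def)
lemma Psi_min: "0 \<le> X \<Longrightarrow> riccati T X \<Longrightarrow> Psi \<le> X"
  using PsiA by (auto simp: is_min_nonneg_sol_def nonneg_iff mle_iff)

lemma Tpm_nonneg: "0 \<le> Tpm" by (simp add: mle_iff blk_entries T_off)
lemma Tmp_nonneg: "0 \<le> Tmp" by (simp add: mle_iff blk_entries T_off)

lemma rows_p: "(Tpp *v 1) $ a + (Tpm *v 1) $ a = 0"
  using T_row[of "Inl a"] by (simp add: mv_entry blk_entries sum_UNIV_sum)
lemma rows_m: "(Tmp *v 1) $ e + (Tmm *v 1) $ e = 0"
  using T_row[of "Inr e"] by (simp add: mv_entry blk_entries sum_UNIV_sum)

definition "RR X = Tpm + X ** Tmm + Tpp ** X + X ** Tmp ** X"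

lemma ric_iff: "riccati T X \<longleftrightarrow> RR X = 0" by (simp add: riccati_def RR_def)

definition "Qpp = mat 1 + (1/lam) *\<^sub>R Tpp"
definition "Qpm = (1/lam) *\<^sub>R Tpm"
definition "Qmp = (1/lam) *\<^sub>R Tmp"
definition "Qmm = mat 1 + (1/lam) *\<^sub>R Tmm"

definition "FF X = (1/2) *\<^sub>R (Qpm + X ** Qmm + Qpp ** X + X ** Qmp ** X)"

lemma FF_RR: "FF X = X + (1/(2*lam)) *\<^sub>R RR X"
  using lam_pos
  by (simp add: FF_def RR_def Qpp_def Qpm_def Qmp_def Qmm_def mm_simps vec_eq_iff field_simps)

lemma Q_nonneg: "0 \<le> Qpp" "0 \<le> Qpm" "0 \<le> Qmp" "0 \<le> Qmm"
proof -
  show "0 \<le> Qpm" unfolding Qpm_def using lam_pos Tpm_nonneg by (simp add: mle_iff)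
  show "0 \<le> Qmp" unfolding Qmp_def using lam_pos Tmp_nonneg by (simp add: mle_iff)
  have d1: "0 \<le> 1 + T$i$i / lam" for i
  proof -
    have "- lam \<le> T$i$i" using T_diag_lam by simp
    then have "-1 \<le> T$i$i / lam" using lam_pos by (simp add: field_simps)
    then show ?thesis by simp
  qed
  have d2: "0 \<le> T$i$j / lam" if "i \<noteq> j" for i j using that T_off lam_pos by simp
  show "0 \<le> Qpp" unfolding Qpp_def by (simp add: mle_iff blk_entries mat1_entry d1 d2)
  show "0 \<le> Qmm" unfolding Qmm_def by (simp add: mle_iff blk_entries mat1_entry d1 d2)
qed

lemma Q_rows: "(Qpp *v 1) $ a + (Qpm *v 1) $ a = 1" "(Qmp *v 1) $ e + (Qmm *v 1) $ e = 1"
proof -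
  have "(Qpp *v 1) $ a + (Qpm *v 1) $ a = 1 + (1/lam) * ((Tpp *v 1) $ a + (Tpm *v 1) $ a)"
    by (simp add: Qpp_def Qpm_def mv_add mv_scale algebra_simps)
  then show "(Qpp *v 1) $ a + (Qpm *v 1) $ a = 1" using rows_p by simp
  have "(Qmp *v 1) $ e + (Qmm *v 1) $ e = 1 + (1/lam) * ((Tmp *v 1) $ e + (Tmm *v 1) $ e)"
    by (simp add: Qmm_def Qmp_def mv_add mv_scale algebra_simps)
  then show "(Qmp *v 1) $ e + (Qmm *v 1) $ e = 1" using rows_m by simp
qed

end


lemma madd_mono: fixes X :: "real^'n::finite^'m::finite" shows "X \<le> Y \<Longrightarrow> X' \<le> Y' \<Longrightarrow> X + X' \<le> Y + Y'"
  by (simp add: mle_iff add_mono)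
lemma mscale_mono: fixes X :: "real^'n::finite^'m::finite" shows "0 \<le> c \<Longrightarrow> X \<le> Y \<Longrightarrow> c *\<^sub>R X \<le> c *\<^sub>R Y"
  by (simp add: mle_iff mult_left_mono)
lemma madd_nonneg: fixes X :: "real^'n::finite^'m::finite" shows "0 \<le> X \<Longrightarrow> 0 \<le> Y \<Longrightarrow> 0 \<le> X + Y"
  by (simp add: mle_iff)
lemma mscale_nonneg: fixes X :: "real^'n::finite^'m::finite" shows "0 \<le> c \<Longrightarrow> 0 \<le> X \<Longrightarrow> 0 \<le> c *\<^sub>R X"
  by (simp add: mle_iff)

context qctx begin

lemma FF_mono: assumes "0 \<le> X" "X \<le> Y" shows "FF X \<le> FF Y"
proof -
  note Q = Q_nonneg
  have Y0: "0 \<le> Y" using assms order.trans by blast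
  have a: "X ** Qmm \<le> Y ** Qmm" by (rule mm_mono_r[OF assms(2) Q(4)])
  have b: "Qpp ** X \<le> Qpp ** Y" by (rule mm_mono_l[OF Q(1) assms(2)])
  have c1: "X ** Qmp ** X \<le> X ** Qmp ** Y" by (rule mm_mono_l[OF mm_nonneg[OF assms(1) Q(3)] assms(2)])
  have c2: "X ** Qmp ** Y \<le> Y ** Qmp ** Y" by (rule mm_mono_r[OF mm_mono_r[OF assms(2) Q(3)] Y0])
  have "Qpm + X ** Qmm + Qpp ** X + X ** Qmp ** X \<le> Qpm + Y ** Qmm + Qpp ** Y + Y ** Qmp ** Y"
    by (intro madd_mono order.refl a b order.trans[OF c1 c2])
  then show ?thesis unfolding FF_def by (rule mscale_mono[rotated]) simp
qed

lemma FF_nonneg: "0 \<le> X \<Longrightarrow> 0 \<le> FF X"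
  unfolding FF_def using Q_nonneg
  by (intro mscale_nonneg madd_nonneg mm_nonneg) auto

lemma FF_rows: assumes X0: "0 \<le> X" and Xr: "X *v 1 \<le> 1" shows "FF X *v 1 \<le> 1"
proof -
  have Xr': "X *v (1::real^'m) \<le> 1" using Xr .
  have m1: "Qpp *v (X *v 1) \<le> Qpp *v 1" by (rule mv_mono[OF Q_nonneg(1) Xr])
  have m2: "X *v (Qmp *v (X *v 1)) \<le> X *v (Qmp *v 1)"
    by (rule mv_mono[OF X0 mv_mono[OF Q_nonneg(3) Xr]])
  have "FF X *v 1 = (1/2) *\<^sub>R (Qpm *v 1 + X *v (Qmm *v 1) + Qpp *v (X *v 1) + X *v (Qmp *v (X *v 1)))"
    unfolding FF_def by (simp add: mv_add mv_scale mv_mm)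
  have "(FF X *v 1) $ a \<le> 1" for a
  proof -
    have "(FF X *v 1) $ a = (1/2) * ((Qpm *v 1)$a + (X *v (Qmm *v 1))$a + (Qpp *v (X *v 1))$a + (X *v (Qmp *v (X *v 1)))$a)"
      unfolding FF_def by (simp add: mv_add mv_scale mv_mm)
    also have "\<dots> \<le> (1/2) * ((Qpm *v 1)$a + (X *v (Qmm *v 1))$a + (Qpp *v 1)$a + (X *v (Qmp *v 1))$a)"
      using spec[OF m1[unfolded less_eq_vec_def], of a] spec[OF m2[unfolded less_eq_vec_def], of a]
      by (intro mult_left_mono add_mono order.refl) auto
    also have "(X *v (Qmm *v 1))$a + (X *v (Qmp *v 1))$a = (X *v 1)$a"
    proof -
      have "Qmm *v 1 + Qmp *v 1 = (1::real^'m)" using Q_rows(2) by (simp add: vec_eq_iff algebra_simps)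
      then have "X *v (Qmm *v 1) + X *v (Qmp *v 1) = X *v 1"
        by (metis matrix_vector_right_distrib)
      then show ?thesis by (metis vector_add_component)
    qed
    then have "(1/2) * ((Qpm *v 1)$a + (X *v (Qmm *v 1))$a + (Qpp *v 1)$a + (X *v (Qmp *v 1))$a)
        = (1/2) * (((Qpp *v 1)$a + (Qpm *v 1)$a) + (X *v 1)$a)" by simp
    also have "\<dots> \<le> 1" using Q_rows(1)[of a] Xr by (simp add: less_eq_vec_def)
    finally show ?thesis .
  qed
  then show ?thesis by (simp add: less_eq_vec_def)
qed

definition "Xs n = (FF ^^ n) 0"

lemma Xs_Suc: "Xs (Suc n) = FF (Xs n)" by (simp add: Xs_def)
lemma Xs_0: "Xs 0 = 0" by (simp add: Xs_def)

lemma Xs_nonneg: "0 \<le> Xs n"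
  by (induction n) (simp_all add: Xs_0 Xs_Suc FF_nonneg)

lemma Xs_rows: "Xs n *v 1 \<le> 1"
proof (induction n)
  case 0 show ?case by (simp add: Xs_0 less_eq_vec_def mv_entry)
next
  case (Suc n) then show ?case by (simp add: Xs_Suc FF_rows Xs_nonneg)
qed

lemma Xs_below: assumes "0 \<le> Y" "FF Y \<le> Y" shows "Xs n \<le> Y"
proof (induction n)
  case 0 show ?case using assms by (simp add: Xs_0)
next
  case (Suc n)
  have "FF (Xs n) \<le> FF Y" by (rule FF_mono[OF Xs_nonneg Suc.IH])
  then show ?case using assms(2) by (simp add: Xs_Suc)
qed

lemma Xs_inc: "Xs n \<le> Xs (Suc n)"
proof (induction n)
  case 0 show ?case by (simp add: Xs_0 Xs_Suc FF_nonneg)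
next
  case (Suc n) then show ?case by (simp add: Xs_Suc FF_mono Xs_nonneg)
qed

lemma FF_Psi: "FF Psi = Psi"
  using Psi_ric by (simp add: FF_RR ric_iff)

definition "LX = (\<chi> i j. SUP n. Xs n $ i $ j)"

lemma LX_lim: "mlim Xs LX"
  unfolding mlim_def LX_def
proof (intro allI)
  fix i j
  have inc: "incseq (\<lambda>n. Xs n $ i $ j)"
    by (rule incseq_SucI) (use Xs_inc in \<open>simp add: mle_iff\<close>)
  have "Xs n \<le> Psi" for n by (rule Xs_below[OF Psi0]) (simp add: FF_Psi)
  then have "bdd_above (range (\<lambda>n. Xs n $ i $ j))"
    by (intro bdd_aboveI[of _ "Psi $ i $ j"]) (auto simp: mle_iff)
  from LIMSEQ_incseq_SUP[OF this inc]
  show "(\<lambda>n. Xs n $ i $ j) \<longlonglongrightarrow> (\<chi> i j. SUP n. Xs n $ i $ j) $ i $ j" by simp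
qed

lemma mlim_FF: "mlim X L \<Longrightarrow> mlim (\<lambda>n. FF (X n)) (FF L)"
  unfolding FF_def by (intro mlim_scale mlim_add mlim_mm mlim_const) auto

lemma LX_fix: "FF LX = LX"
proof -
  have "mlim (\<lambda>n. FF (Xs n)) (FF LX)" by (rule mlim_FF[OF LX_lim])
  moreover have "mlim (\<lambda>n. FF (Xs n)) LX" using mlim_Suc[OF LX_lim] by (simp add: Xs_Suc)
  ultimately show ?thesis by (rule mlim_unique)
qed

lemma LX_nonneg: "0 \<le> LX" by (rule mlim_ge[OF LX_lim Xs_nonneg])

lemma Psi_le_LX: "Psi \<le> LX"
proof (rule Psi_min[OF LX_nonneg])
  have "(1/(2*lam)) *\<^sub>R RR LX = 0" using LX_fix FF_RR[of LX] by simp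
  then show "riccati T LX" using lam_pos by (simp add: ric_iff)
qed

lemma LX_rows: "LX *v 1 \<le> 1"
proof -
  have "(LX *v 1) $ i \<le> 1" for i
  proof -
    have "(\<lambda>n. (Xs n *v 1) $ i) \<longlonglongrightarrow> (LX *v 1) $ i"
      using LX_lim unfolding mlim_def mv_entry by (auto intro!: tendsto_sum tendsto_mult)
    moreover have "\<forall>n. (Xs n *v 1) $ i \<le> 1" using Xs_rows by (simp add: less_eq_vec_def)
    ultimately show ?thesis by (meson LIMSEQ_le_const2)
  qed
  then show ?thesis by (simp add: less_eq_vec_def)
qed

lemma Psi_rows: "Psi *v 1 \<le> 1"
proof -
  have o: "0 \<le> (1::real^'m)" by (simp add: less_eq_vec_def)
  show ?thesis
    using mv_mono_mat[OF Psi_le_LX o] LX_rows unfolding less_eq_vec_def by (meson order_trans)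
qed
  
lemma Psi_below: "0 \<le> Y \<Longrightarrow> FF Y \<le> Y \<Longrightarrow> Psi \<le> Y"
  using Psi_le_LX mlim_le[OF LX_lim Xs_below] order.trans by blast

end


lemma mm_sum_l: fixes A :: "real^'n::finite^'m::finite" shows "A ** sum f S = (\<Sum>x\<in>S. A ** f x)"
  by (induction S rule: infinite_finite_induct) (simp_all add: mm_add_l)
lemma mm_sum_r: fixes A :: "real^'n::finite^'m::finite" shows "sum f S ** A = (\<Sum>x\<in>S. f x ** A)"
  by (induction S rule: infinite_finite_induct) (simp_all add: mm_add_r)

context qctx begin

definition "U = Tmm + Tmp ** Psi"
definition "Ni = mat 1 - (1/lam) *\<^sub>R U"
definition "Mi = mat 1 - (1/mu) *\<^sub>R Tpp"
definition "MM = matrix_inv Mi"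
definition "Ninv = matrix_inv Ni"
definition "WW = (mat 1 + (1/mu) *\<^sub>R U) ** Ninv"
definition "Plam = mat 1 + (1/lam) *\<^sub>R T"
definition "Pmu = mat 1 + (1/mu) *\<^sub>R T"
definition "AA = MM ** blk_pp Plam"
definition "BB0 = MM ** blk_pm Plam"
definition "BBd = MM ** blk_pm Pmu"

lemma Plam_pp: "blk_pp Plam = mat 1 + (1/lam) *\<^sub>R Tpp"
  by (simp add: Plam_def vec_eq_iff blk_entries mat1_entry)
lemma Plam_pm: "blk_pm Plam = (1/lam) *\<^sub>R Tpm"
  by (simp add: Plam_def vec_eq_iff blk_entries mat1_entry)
lemma Pmu_pm: "blk_pm Pmu = (1/mu) *\<^sub>R Tpm"
  by (simp add: Pmu_def vec_eq_iff blk_entries mat1_entry)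

lemma U_entry: "U $ i $ j = T $ Inr i $ Inr j + (Tmp ** Psi) $ i $ j"
  by (simp add: U_def blk_entries)

lemma TmpPsi_nonneg: "0 \<le> Tmp ** Psi" by (rule mm_nonneg[OF Tmp_nonneg Psi0])

lemma U_off: "i \<noteq> j \<Longrightarrow> 0 \<le> U $ i $ j"
  using TmpPsi_nonneg T_off[of "Inr i" "Inr j"] by (simp add: U_entry mle_iff add_nonneg_nonneg)

lemma U_diag: "T $ Inr i $ Inr i \<le> U $ i $ i"
  using TmpPsi_nonneg by (simp add: U_entry mle_iff)

lemma U_rows: "(U *v 1) $ i \<le> 0"
proof -
  have "U *v 1 = Tmm *v 1 + Tmp *v (Psi *v 1)" by (simp add: U_def mv_add mv_mm)
  moreover have "Tmp *v (Psi *v 1) \<le> Tmp *v 1" by (rule mv_mono[OF Tmp_nonneg Psi_rows])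
  ultimately have "(U *v 1) $ i \<le> (Tmm *v 1) $ i + (Tmp *v 1) $ i" by (simp add: less_eq_vec_def)
  then show ?thesis using rows_m[of i] by simp
qed

lemma rowsum_mv: "(\<Sum>j\<in>UNIV. N$i$j) = (N *v 1) $ i" by (simp add: mv_entry)

lemma Ni_props: "matrix_inv Ni ** Ni = mat 1" "Ni ** matrix_inv Ni = mat 1" "\<And>i j. matrix_inv Ni $ i $ j \<ge> 0"
proof -
  have off: "\<And>i j. i \<noteq> j \<Longrightarrow> Ni$i$j \<le> 0" using U_off lam_pos by (simp add: Ni_def mat1_entry)
  have rs: "\<And>i. (\<Sum>j\<in>UNIV. Ni$i$j) > 0"
  proof -
    fix i
    have "(Ni *v 1) $ i = 1 - (1/lam) * (U *v 1) $ i" by (simp add: Ni_def mv_scale mv_entry mat1_entry sum_subtractf sum_divide_distrib)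
    moreover have "(U *v 1) $ i / lam \<le> 0" using U_rows[of i] lam_pos by (simp add: divide_nonpos_pos)
    ultimately show "(\<Sum>j\<in>UNIV. Ni$i$j) > 0" unfolding rowsum_mv by simp
  qed
  show "matrix_inv Ni ** Ni = mat 1" "Ni ** matrix_inv Ni = mat 1" "\<And>i j. matrix_inv Ni $ i $ j \<ge> 0"
    using zmat_inv[OF off rs] by auto
qed

lemma Mi_props: "matrix_inv Mi ** Mi = mat 1" "Mi ** matrix_inv Mi = mat 1" "\<And>i j. matrix_inv Mi $ i $ j \<ge> 0"
proof -
  have off: "\<And>i j. i \<noteq> j \<Longrightarrow> Mi$i$j \<le> 0" using T_off mu_pos by (simp add: Mi_def mat1_entry blk_entries)
  have rs: "\<And>i. (\<Sum>j\<in>UNIV. Mi$i$j) > 0"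
  proof -
    fix i
    have "(Mi *v 1) $ i = 1 - (1/mu) * (Tpp *v 1) $ i" by (simp add: Mi_def mv_scale mv_entry mat1_entry sum_subtractf sum_divide_distrib)
    moreover have "(Tpp *v 1) $ i = - (Tpm *v 1) $ i" using rows_p[of i] by simp
    moreover have "0 \<le> (Tpm *v 1) $ i" using mv_nonneg[OF Tpm_nonneg, of 1] by (simp add: less_eq_vec_def)
    then have "0 \<le> (Tpm *v 1) $ i / mu" using mu_pos by simp
    ultimately show "(\<Sum>j\<in>UNIV. Mi$i$j) > 0" unfolding rowsum_mv using mu_pos by simp
  qed
  show "matrix_inv Mi ** Mi = mat 1" "Mi ** matrix_inv Mi = mat 1" "\<And>i j. matrix_inv Mi $ i $ j \<ge> 0"
    using zmat_inv[OF off rs] by auto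
qed

lemma MM_nonneg: "0 \<le> MM" using Mi_props(3) by (simp add: MM_def mle_iff)
lemma Ninv_nonneg: "0 \<le> Ninv" using Ni_props(3) by (simp add: Ninv_def mle_iff)

lemma IU_nonneg: "0 \<le> mat 1 + (1/mu) *\<^sub>R U"
proof -
  have "0 \<le> (if i = j then 1 else 0) + U$i$j / mu" for i j
  proof (cases "i = j")
    case True
    have "- mu \<le> U$i$i" using U_diag[of i] T_diag_mu[of "Inr i"] by simp
    then have "-1 \<le> U$i$i / mu" using mu_pos by (simp add: field_simps)
    then show ?thesis using True by simp
  next
    case False then show ?thesis using U_off mu_pos by simp
  qed
  then show ?thesis by (simp add: mle_iff mat1_entry)
qed

lemma WW_nonneg: "0 \<le> WW" unfolding WW_def by (rule mm_nonneg[OF IU_nonneg Ninv_nonneg])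
lemma AA_nonneg: "0 \<le> AA" unfolding AA_def Plam_pp
  using Q_nonneg(1) MM_nonneg by (simp add: Qpp_def mm_nonneg)
lemma BB0_nonneg: "0 \<le> BB0" unfolding BB0_def Plam_pm
  using lam_pos Tpm_nonneg MM_nonneg by (simp add: mm_nonneg mscale_nonneg)
lemma BBd_nonneg: "0 \<le> BBd" unfolding BBd_def Pmu_pm
  using mu_pos Tpm_nonneg MM_nonneg by (simp add: mm_nonneg mscale_nonneg)

definition "ff X = BBd + BB0 ** WW + AA ** X ** WW"

lemma WW_Ni: "Z ** WW ** Ni = Z ** (mat 1 + (1/mu) *\<^sub>R U)"
proof -
  have "WW ** Ni = mat 1 + (1/mu) *\<^sub>R U"
    unfolding WW_def Ninv_def by (simp add: matrix_mul_assoc[symmetric] Ni_props(1))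
  then show ?thesis by (simp add: matrix_mul_assoc[symmetric])
qed

lemma Mi_ff: "Mi ** ff X = blk_pm Pmu + blk_pm Plam ** WW + blk_pp Plam ** X ** WW"
  unfolding ff_def AA_def BB0_def BBd_def MM_def
  by (simp add: mm_add_l matrix_mul_assoc Mi_props(2))

lemma ff_key: "Mi ** (ff X - X) ** Ni = (1/lam + 1/mu) *\<^sub>R (Tpm + X ** U + Tpp ** X)"
proof -
  have e1: "Mi ** (ff X - X) ** Ni = (Mi ** ff X) ** Ni - Mi ** X ** Ni" by (simp add: mm_sub_l mm_sub_r)
  have e2: "(Mi ** ff X) ** Ni = blk_pm Pmu ** Ni + blk_pm Plam ** (mat 1 + (1/mu) *\<^sub>R U)
       + blk_pp Plam ** X ** (mat 1 + (1/mu) *\<^sub>R U)"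
    unfolding Mi_ff by (simp add: mm_add_r WW_Ni)
  have "Mi ** (ff X - X) ** Ni = blk_pm Pmu ** Ni + blk_pm Plam ** (mat 1 + (1/mu) *\<^sub>R U)
       + blk_pp Plam ** X ** (mat 1 + (1/mu) *\<^sub>R U) - Mi ** X ** Ni"
    unfolding e1 e2 ..
  also have "\<dots> = (1/lam + 1/mu) *\<^sub>R (Tpm + X ** U + Tpp ** X)"
    using lam_pos mu_pos
    by (simp add: Plam_pp Plam_pm Pmu_pm Ni_def Mi_def mm_simps vec_eq_iff field_simps)
  finally show ?thesis .
qed

end


context qctx begin

lemma cancel_Ni: "Z ** Ni ** matrix_inv Ni = Z" by (simp add: matrix_mul_assoc[symmetric] Ni_props(2))

lemma ff_fix_iff: "ff X = X \<longleftrightarrow> Tpm + X ** U + Tpp ** X = 0"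
proof
  assume "ff X = X"
  then have "(1/lam + 1/mu) *\<^sub>R (Tpm + X ** U + Tpp ** X) = 0" using ff_key[of X] by simp
  moreover have "0 < 1/lam + 1/mu" using lam_pos mu_pos by (intro add_pos_pos) simp_all
  then have "1/lam + 1/mu \<noteq> 0" by simp
  ultimately show "Tpm + X ** U + Tpp ** X = 0" by simp
next
  assume "Tpm + X ** U + Tpp ** X = 0"
  then have z: "Mi ** (ff X - X) ** Ni = 0" using ff_key[of X] by simp
  have "ff X - X = MM ** (Mi ** (ff X - X) ** Ni) ** Ninv"
    by (simp add: matrix_mul_assoc MM_def Ninv_def Mi_props(1) cancel_Ni)
  then show "ff X = X" using z by simp
qed

lemma ff_Psi: "ff Psi = Psi"
proof -
  have "Tpm + Psi ** Tmm + Tpp ** Psi + Psi ** Tmp ** Psi = 0" using Psi_ric by (simp add: riccati_def)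
  then have "Tpm + Psi ** U + Tpp ** Psi = 0" by (simp add: U_def mm_add_l matrix_mul_assoc algebra_simps)
  then show ?thesis by (simp add: ff_fix_iff)
qed

lemma ff_mono: "X \<le> Y \<Longrightarrow> ff X \<le> ff Y"
  unfolding ff_def
  by (intro madd_mono order.refl mm_mono_r[OF mm_mono_l[OF AA_nonneg] WW_nonneg])

lemma ff_nonneg: "0 \<le> X \<Longrightarrow> 0 \<le> ff X"
  unfolding ff_def using AA_nonneg WW_nonneg BB0_nonneg BBd_nonneg
  by (intro madd_nonneg mm_nonneg) auto

definition "Sp N = (ff ^^ N) 0"

lemma Sp_Suc: "Sp (Suc N) = ff (Sp N)" by (simp add: Sp_def)

lemma Sp_nonneg: "0 \<le> Sp N" by (induction N) (simp_all add: Sp_def ff_nonneg)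

lemma Sp_le: "Sp N \<le> Psi"
proof (induction N)
  case 0 show ?case using Psi0 by (simp add: Sp_def)
next
  case (Suc N) then show ?case using ff_mono[OF Suc.IH] by (simp add: Sp_Suc ff_Psi)
qed

lemma mpow_left: fixes X :: "real^'n::finite^'n" shows "X ** (mpow X m ** Z) = mpow X (Suc m) ** Z"
  by (simp add: matrix_mul_assoc)

lemma Sp_closed: "Sp N = (\<Sum>m<N. mpow AA m ** BBd ** mpow WW m + mpow AA m ** BB0 ** mpow WW (Suc m))"
proof (induction N)
  case 0 show ?case by (simp add: Sp_def)
next
  case (Suc N)
  have "Sp (Suc N) = BBd + BB0 ** WW + (\<Sum>m<N. AA ** (mpow AA m ** BBd ** mpow WW m + mpow AA m ** BB0 ** mpow WW (Suc m)) ** WW)"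
    by (simp add: Sp_Suc Suc.IH ff_def mm_sum_l mm_sum_r)
  also have "(\<Sum>m<N. AA ** (mpow AA m ** BBd ** mpow WW m + mpow AA m ** BB0 ** mpow WW (Suc m)) ** WW)
     = (\<Sum>m<N. mpow AA (Suc m) ** BBd ** mpow WW (Suc m) + mpow AA (Suc m) ** BB0 ** mpow WW (Suc (Suc m)))"
  proof (rule sum.cong[OF refl])
    fix m
    show "AA ** (mpow AA m ** BBd ** mpow WW m + mpow AA m ** BB0 ** mpow WW (Suc m)) ** WW =
      mpow AA (Suc m) ** BBd ** mpow WW (Suc m) + mpow AA (Suc m) ** BB0 ** mpow WW (Suc (Suc m))"
      by (simp only: mm_add_l mm_add_r matrix_mul_assoc[symmetric] mpow_Suc_right[symmetric] mpow_left)
  qed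
  finally show ?case unfolding sum.lessThan_Suc_shift by (simp add: add.assoc)
qed

end


context qctx begin

abbreviation "hq \<equiv> hh AA BB0 BBd WW"

lemma hq_nonneg: "0 \<le> hq n"
  unfolding hh_def using AA_nonneg BB0_nonneg BBd_nonneg WW_nonneg
  by (auto intro!: mm_nonneg mpow_nonneg)

lemma hq_sum: "(\<Sum>n<2*N. hq n) = Sp N"
proof (induction N)
  case 0 show ?case by (simp add: Sp_def)
next
  case (Suc N)
  have e: "2 * Suc N = Suc (Suc (2*N))" by simp
  have h1: "hq (2*N) = mpow AA N ** BBd ** mpow WW N" by (simp add: hh_def)
  have h2: "hq (Suc (2*N)) = mpow AA N ** BB0 ** mpow WW (Suc N)" by (simp add: hh_def)
  show ?case unfolding e sum.lessThan_Suc Suc.IH h1 h2 Sp_closed[of "Suc N"] Sp_closed[of N]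
    by (simp add: add.assoc)
qed

definition "SS = (\<chi> i j. \<Sum>n. hq n $ i $ j)"

lemma hq_summable: "summable (\<lambda>n. hq n $ i $ j)"
proof (rule summableI_nonneg_bounded)
  show "\<And>n. 0 \<le> hq n $ i $ j" using hq_nonneg by (simp add: mle_iff)
  fix K
  have "(\<Sum>n<K. hq n $ i $ j) \<le> (\<Sum>n<2*K. hq n $ i $ j)"
    using hq_nonneg by (intro sum_mono2) (auto simp: mle_iff)
  also have "\<dots> = Sp K $ i $ j" using hq_sum[of K] by (metis sum_component)
  also have "\<dots> \<le> Psi $ i $ j" using Sp_le by (simp add: mle_iff)
  finally show "(\<Sum>n<K. hq n $ i $ j) \<le> Psi $ i $ j" .
qed

lemma Sp_lim: "mlim Sp SS"
  unfolding mlim_def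
proof (intro allI)
  fix i j
  have sm: "strict_mono (\<lambda>N::nat. 2*N)" by (rule strict_monoI) simp
  have "((\<lambda>K. \<Sum>n<K. hq n $ i $ j) \<circ> (\<lambda>N. 2*N)) \<longlonglongrightarrow> (\<Sum>n. hq n $ i $ j)"
    by (rule LIMSEQ_subseq_LIMSEQ[OF summable_LIMSEQ[OF hq_summable] sm])
  moreover have "((\<lambda>K. \<Sum>n<K. hq n $ i $ j) \<circ> (\<lambda>N. 2*N)) = (\<lambda>N. Sp N $ i $ j)"
    using hq_sum by (auto simp: comp_def fun_eq_iff) (metis sum_component)
  ultimately show "(\<lambda>N. Sp N $ i $ j) \<longlonglongrightarrow> SS $ i $ j" by (simp add: SS_def)
qed

lemma mlim_ff: "mlim X L \<Longrightarrow> mlim (\<lambda>n. ff (X n)) (ff L)"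
  unfolding ff_def by (intro mlim_add mlim_mm mlim_const) auto

lemma SS_fix: "ff SS = SS"
proof -
  have "mlim (\<lambda>n. ff (Sp n)) (ff SS)" by (rule mlim_ff[OF Sp_lim])
  moreover have "mlim (\<lambda>n. ff (Sp n)) SS" using mlim_Suc[OF Sp_lim] by (simp add: Sp_Suc)
  ultimately show ?thesis by (rule mlim_unique)
qed

lemma SS_le: "SS \<le> Psi" by (rule mlim_le[OF Sp_lim Sp_le])
lemma SS_nonneg: "0 \<le> SS" by (rule mlim_ge[OF Sp_lim Sp_nonneg])

lemma SS_eq: "SS = Psi"
proof (rule order.antisym[OF SS_le])
  have z: "Tpm + SS ** U + Tpp ** SS = 0" using SS_fix ff_fix_iff by blast
  have "RR SS = (Tpm + SS ** U + Tpp ** SS) + SS ** Tmp ** (SS - Psi)"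
    by (simp add: RR_def U_def mm_simps algebra_simps)
  then have r: "RR SS = SS ** Tmp ** (SS - Psi)" using z by simp
  have "SS - Psi \<le> 0" using SS_le by (simp add: mle_iff)
  then have "RR SS \<le> 0" unfolding r by (rule mm_nonpos[OF mm_nonneg[OF SS_nonneg Tmp_nonneg]])
  then have "FF SS \<le> SS" unfolding FF_RR using lam_pos
    by (simp add: mle_iff divide_nonpos_pos)
  then show "Psi \<le> SS" by (rule Psi_below[OF SS_nonneg])
qed

lemma main_G: "qbd_G (block_mat 0 BBd 0 WW) (block_mat 0 BB0 0 0) (block_mat AA 0 0 0) = block_mat 0 Psi 0 WW"
  using G_closed[of BBd WW BB0 AA] SS_eq by (simp add: SS_def)

end
theorem lemma3:
  fixes T :: "real^('p::finite + 'm::finite)^('p + 'm)"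
    and Psi :: "real^'m^'p"
    and lam mu :: real
  assumes gen: "is_generator T"
    and Psi: "is_min_nonneg_sol T Psi"
    and lam_pos: "lam > 0" and mu_pos: "mu > 0"
    and lam_ge: "\<forall>i. \<bar>T $ i $ i\<bar> \<le> lam"
    and mu_ge: "\<forall>i. \<bar>T $ i $ i\<bar> \<le> mu"
  defines "U \<equiv> blk_mm T + blk_mp T ** Psi"
    and "P_lam \<equiv> mat 1 + (1 / lam) *\<^sub>R T"
    and "P_mu \<equiv> mat 1 + (1 / mu) *\<^sub>R T"
  defines "W \<equiv> (mat 1 + (1 / mu) *\<^sub>R U) ** matrix_inv (mat 1 - (1 / lam) *\<^sub>R U)"
    and "M \<equiv> matrix_inv (mat 1 - (1 / mu) *\<^sub>R blk_pp T)"
  defines "Cm \<equiv> block_mat 0 (M ** blk_pm P_mu) 0 W"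
    and "C0 \<equiv> block_mat 0 (M ** blk_pm P_lam) 0 0"
    and "C1 \<equiv> block_mat (M ** blk_pp P_lam) 0 0 0"
  shows "qbd_G Cm C0 C1 = block_mat 0 Psi 0 W"
proof -
  interpret Q: qctx T Psi lam mu
    by unfold_locales (use assms(1-6) in auto)
  have main: "qbd_G (block_mat 0 Q.BBd 0 Q.WW) (block_mat 0 Q.BB0 0 0) (block_mat Q.AA 0 0 0) = block_mat 0 Psi 0 Q.WW"
    by (rule Q.main_G)
  show ?thesis
    using main unfolding assms(7-14)
    unfolding Q.BBd_def Q.BB0_def Q.AA_def Q.WW_def Q.MM_def Q.Mi_def Q.Pmu_def Q.Plam_def Q.Ninv_def Q.Ni_def Q.U_def .
qed

end
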